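(* Let $v$, $g$, $b$ be positive integers with $v$ odd, and suppose a $(v,g,b)$ non-half-sum disjoint packing exists. Then there exists a $(v,v,v-bg,bv)$ placement delivery array. Consequently, there exists a $v$-division $(K=v,M,N)$ coded caching scheme with memory ratio $\frac{M}{N}=1-\frac{bg}{v}$, subpacketization $F=v$, transmission load $R=b$, and coded caching gain $\frac{K(1-M/N)}{R}=g$.
   Context: Arithmetic is in $\mathbb{Z}_v$, the ring of integers modulo $v$; since $v$ is odd, $2$ is invertible and the half-sum of $x,y\in\mathbb{Z}_v$ is $(x+y)\cdot 2^{-1}$. A $(v,g,b)$ non-half-sum disjoint packing (NHSDP) is a pair $(\mathbb{Z}_v,\mathfrak{D})$ where $\mathfrak{D}$ is a family of $b$ subsets ("blocks") of $\mathbb{Z}_v$, each of size $g$, such that (i) any two different blocks are disjoint, and (ii) for each block $\mathcal{D}\in\mathfrak{D}$ and any two different elements $x,y\in\mathcal{D}$, the half-sum $(x+y)/2$ does not belong to any block of $\mathfrak{D}$. A $(K,F,Z,S)$ placement delivery array (PDA) is an $F\times K$ array $\mathbf{P}=(p_{j,k})$ with entries from $\{*\}\cup[S]$ such that: (C1) each column contains exactly $Z$ stars; (C2) each integer of $[S]$ occurs at least once; (C3) for any two distinct entries $p_{j_1,k_1}=p_{j_2,k_2}=s\in[S]$ we have $j_1\neq j_2$, $k_1\neq k_2$, and $p_{j_1,k_2}=p_{j_2,k_1}=*$. A $(K,M,N)$ coded caching system consists of a server storing $N$ equal-size files and $K$ users each with a cache of size $M$ files, connected by an error-free shared broadcast link.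 An $F$-division scheme splits each file into $F$ equal-size packets; in the placement phase packets are stored in user caches without knowledge of future demands; in the delivery phase each user requests one file and the server broadcasts coded messages (XORs of packets) so that every user can decode its requested file. The transmission load $R$ is the worst case over all demand vectors of the total broadcast size normalized by the file size; $M/N$ is the memory ratio and $F$ the subpacketization. The coded caching gain is $K(1-M/N)/R$. *)

theory Defs
  imports Complex_Main "HOL-Library.Disjoint_Sets"
begin

text \<open>Z_v is represented by the integers {0..<v}; the half-sum of x and y
  is (x + y) * 2^{-1} mod v, where 2^{-1} = (v+1) div 2 for odd v.\<close>

definition half_sum :: "int \<Rightarrow> int \<Rightarrow> int \<Rightarrow> int" where
  "half_sum v x y = ((x + y) * ((v + 1) div 2)) mod v"

definition NHSDP :: "nat \<Rightarrow> nat \<Rightarrow> nat \<Rightarrow> int set set \<Rightarrow> bool" where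
  "NHSDP v g b D \<longleftrightarrow>
     finite D \<and> card D = b \<and>
     (\<forall>B\<in>D. B \<subseteq> {0..<int v} \<and> card B = g) \<and>
     disjoint D \<and>
     (\<forall>B\<in>D. \<forall>x\<in>B. \<forall>y\<in>B. x \<noteq> y \<longrightarrow> half_sum (int v) x y \<notin> \<Union>D)"

text \<open>A (K,F,Z,S) PDA: an F x K array, rows j < F, columns k < K;
  entry None is the star, entry Some s an integer s of [S] = {1..S}.\<close>
definition PDA :: "nat \<Rightarrow> nat \<Rightarrow> nat \<Rightarrow> nat \<Rightarrow> (nat \<Rightarrow> nat \<Rightarrow> nat option) \<Rightarrow> bool" where
  "PDA K F Z S P \<longleftrightarrow>
     (\<forall>j<F. \<forall>k<K. \<forall>s. P j k = Some s \<longrightarrow> s \<in> {1..S}) \<and>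
     (\<forall>k<K. card {j. j < F \<and> P j k = None} = Z) \<and>
     (\<forall>s\<in>{1..S}. \<exists>j<F. \<exists>k<K. P j k = Some s) \<and>
     (\<forall>j1<F. \<forall>k1<K. \<forall>j2<F. \<forall>k2<K. \<forall>s.
        P j1 k1 = Some s \<and> P j2 k2 = Some s \<and> (j1, k1) \<noteq> (j2, k2) \<longrightarrow>
        j1 \<noteq> j2 \<and> k1 \<noteq> k2 \<and> P j1 k2 = None \<and> P j2 k1 = None)"

end

theory Submission
  imports Defs
begin

lemma two_inv:
  fixes v :: int assumes "odd v"
  shows "(2 * ((v+1) div 2) * a) mod v = a mod v"
proof -
  have "2 * ((v+1) div 2) = v + 1" using assms by (auto elim!: oddE)
  then have "2 * ((v+1) div 2) * a = a + v * a" by (simp add: algebra_simps)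
  then show ?thesis by simp
qed

lemma cancel2:
  fixes v a c :: int assumes "odd v" "(2*a) mod v = (2*c) mod v"
  shows "a mod v = c mod v"
proof -
  have "v dvd 2*(a - c)" using assms(2) by (metis mod_eq_dvd_iff right_diff_distrib)
  moreover have "coprime v 2" using assms(1) by simp
  ultimately have "v dvd (a - c)" using coprime_dvd_mult_right_iff by blast
  then show ?thesis by (simp add: mod_eq_dvd_iff)
qed

lemma hs_lemma:
  fixes v x y k1 j1 k2 j2 :: int
  assumes "odd v" "x = (k1 - j1) mod v" "y = (k2 - j2) mod v" "(j1 + k1) mod v = (j2 + k2) mod v"
  shows "half_sum v x y = (k2 - j1) mod v" "half_sum v x y = (k1 - j2) mod v"
proof -
  let ?h = "(v+1) div 2"
  have d1: "v dvd (j1 + k1) - (j2 + k2)" using assms(4) by (simp add: mod_eq_dvd_iff)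
  have "(x + y) mod v = ((k1 - j1) + (k2 - j2)) mod v" using assms(2,3) by (simp add: mod_add_eq)
  also have "\<dots> = (2 * (k2 - j1)) mod v"
  proof -
    have "(k1 - j1) + (k2 - j2) - 2 * (k2 - j1) = (j1 + k1) - (j2 + k2)" by simp
    then show ?thesis using d1 by (metis mod_eq_dvd_iff)
  qed
  finally have A: "(x + y) mod v = (2 * (k2 - j1)) mod v" .
  have "half_sum v x y = ((x + y) mod v * ?h) mod v" unfolding half_sum_def by (simp add: mod_mult_left_eq)
  also have "\<dots> = ((2 * (k2 - j1)) mod v * ?h) mod v" using A by simp
  also have "\<dots> = ((2 * (k2 - j1)) * ?h) mod v" by (rule mod_mult_left_eq)
  also have "\<dots> = (2 * ?h * (k2 - j1)) mod v" by (simp only: ac_simps)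
  also have "\<dots> = (k2 - j1) mod v" using two_inv[OF assms(1)] by simp
  finally show "half_sum v x y = (k2 - j1) mod v" .
  have "(k2 - j1) - (k1 - j2) = (j2 + k2) - (j1 + k1)" by simp
  then have "(k2 - j1) mod v = (k1 - j2) mod v" using d1 by (metis mod_eq_dvd_iff dvd_minus_iff minus_diff_eq)
  with \<open>half_sum v x y = (k2 - j1) mod v\<close> show "half_sum v x y = (k1 - j2) mod v" by simp
qed

lemma mod_small_eq:
  fixes a c v :: int
  assumes "0 \<le> a" "a < v" "0 \<le> c" "c < v" "a mod v = c mod v"
  shows "a = c"
  using assms by simp

lemma divmod_eq:
  fixes i1 i2 t1 t2 v :: nat
  assumes "t1 < v" "t2 < v" "i1 * v + t1 = i2 * v + t2"
  shows "i1 = i2 \<and> t1 = t2"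
proof -
  have "(i1 * v + t1) div v = i1" "(i2 * v + t2) div v = i2"
       "(i1 * v + t1) mod v = t1" "(i2 * v + t2) mod v = t2" using assms(1,2) by auto
  then have "i1 = i2" using assms(3) by (metis)
  moreover have "t1 = t2" using assms(3) \<open>(i1 * v + t1) mod v = t1\<close> \<open>(i2 * v + t2) mod v = t2\<close> by metis
  ultimately show ?thesis by simp
qed

theorem theorem1:
  fixes v g b :: nat and D :: "int set set"
  assumes "v > 0" "g > 0" "b > 0" "odd v"
    and "NHSDP v g b D"
  shows "b * g \<le> v
    \<and> (\<exists>P. PDA v v (v - b * g) (b * v) P)
    \<and> real (v - b * g) / real v = 1 - real (b * g) / real v
    \<and> real (b * v) / real v = real b
    \<and> real v * (1 - real (v - b * g) / real v) / (real (b * v) / real v) = real g"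
proof -
  note N = assms(5)[unfolded NHSDP_def]
  have finD: "finite D" and cardD: "card D = b" and sub: "\<And>B. B \<in> D \<Longrightarrow> B \<subseteq> {0..<int v}"
    and cardB: "\<And>B. B \<in> D \<Longrightarrow> card B = g" and disj: "disjoint D"
    and nhs: "\<And>B x y. B \<in> D \<Longrightarrow> x \<in> B \<Longrightarrow> y \<in> B \<Longrightarrow> x \<noteq> y \<Longrightarrow> half_sum (int v) x y \<notin> \<Union>D"
    using N by auto
  define U where "U = \<Union>D"
  have Usub: "U \<subseteq> {0..<int v}" using sub U_def by auto
  have finU: "finite U" using Usub finite_subset by blast
  have cardU: "card U = b * g"
  proof -
    have "card U = sum card D" unfolding U_def
      using card_Union_disjoint[OF disj] sub finite_subset by (metis finite_atLeastLessThan_int)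
    also have "\<dots> = sum (\<lambda>_. g) D" using cardB by simp
    finally show ?thesis using cardD by simp
  qed
  have bg: "b * g \<le> v"
  proof -
    have "card U \<le> card {0..<int v}" using Usub card_mono by blast
    then show ?thesis using cardU by simp
  qed
  obtain e where e: "bij_betw e {0..<b} D" using ex_bij_betw_nat_finite[OF finD] cardD by blast
  have eD: "\<And>i. i < b \<Longrightarrow> e i \<in> D" using e bij_betwE by fastforce
  have inU: "\<And>d. d \<in> U \<longleftrightarrow> (\<exists>i<b. d \<in> e i)"
  proof
    fix d assume "d \<in> U"
    then obtain B where "B \<in> D" "d \<in> B" unfolding U_def by blast
    then obtain i where "i < b" "e i = B" using e by (metis atLeastLessThan_iff bij_betw_iff_bijections zero_le)
    then show "\<exists>i<b. d \<in> e i" using \<open>d \<in> B\<close> by blast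
  next
    fix d assume "\<exists>i<b. d \<in> e i"
    then show "d \<in> U" unfolding U_def using eD by blast
  qed
  define idx where "idx d = (LEAST i. i < b \<and> d \<in> e i)" for d
  have idx: "idx d = i" if "i < b" "d \<in> e i" for d i
    unfolding idx_def
  proof (rule Least_equality)
    show "i < b \<and> d \<in> e i" using that by simp
  next
    fix i' assume "i' < b \<and> d \<in> e i'"
    then have "e i' = e i"
      using disj that eD unfolding disjoint_def disjnt_def by blast
    then have "i' = i" using e that \<open>i' < b \<and> d \<in> e i'\<close> unfolding bij_betw_def inj_on_def by simp
    then show "i \<le> i'" by simp
  qed
  have idxlt: "idx d < b" if "d \<in> U" for d
    using inU that idx by blast
  define f where "f j k = (int k - int j) mod int v" for j k :: nat
  define P where "P j k = (if f j k \<in> U then Some (idx (f j k) * v + (j + k) mod v + 1) else None)" for j k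
  have vi: "int v > 0" using assms(1) by simp
  have oddi: "odd (int v)" using assms(4) by simp
  have pda: "PDA v v (v - b * g) (b * v) P"
    unfolding PDA_def
  proof (intro conjI)
    show "\<forall>j<v. \<forall>k<v. \<forall>s. P j k = Some s \<longrightarrow> s \<in> {1..b * v}"
    proof (intro allI impI)
      fix j k s assume "j < v" "k < v" "P j k = Some s"
      then have fU: "f j k \<in> U" and s: "s = idx (f j k) * v + (j + k) mod v + 1"
        unfolding P_def by (auto split: if_splits)
      have "idx (f j k) + 1 \<le> b" using idxlt[OF fU] by simp
      then have "(idx (f j k) + 1) * v \<le> b * v" by (rule mult_right_mono) simp
      moreover have "(j + k) mod v < v" using assms(1) by simp
      ultimately show "s \<in> {1..b * v}" using s by (simp add: algebra_simps)
    qed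
  next
    show "\<forall>k<v. card {j. j < v \<and> P j k = None} = v - b * g"
    proof (intro allI impI)
      fix k assume kv: "k < v"
      have inj: "inj_on (\<lambda>j. f j k) {0..<v}"
      proof (rule inj_onI)
        fix j1 j2 assume j: "j1 \<in> {0..<v}" "j2 \<in> {0..<v}" "f j1 k = f j2 k"
        then have "(int k - int j1) mod int v = (int k - int j2) mod int v" unfolding f_def by simp
        then have "int v dvd (int k - int j1) - (int k - int j2)" by (simp add: mod_eq_dvd_iff)
        then have "int v dvd int j2 - int j1" by simp
        then have "int j2 mod int v = int j1 mod int v" by (simp add: mod_eq_dvd_iff)
        then show "j1 = j2" using j by simp
      qed
      have img_sub: "(\<lambda>j. f j k) ` {0..<v} \<subseteq> {0..<int v}" unfolding f_def using vi by auto
      have img: "(\<lambda>j. f j k) ` {0..<v} = {0..<int v}"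
        using card_subset_eq[OF _ img_sub] card_image[OF inj] by simp
      have "{j. j < v \<and> P j k = None} = {j \<in> {0..<v}. f j k \<notin> U}" unfolding P_def by (simp add: set_eq_iff)
      moreover have "inj_on (\<lambda>j. f j k) {j \<in> {0..<v}. f j k \<notin> U}" using inj by (rule inj_on_subset) auto
      moreover have "(\<lambda>j. f j k) ` {j \<in> {0..<v}. f j k \<notin> U} = {0..<int v} - U"
      proof
        show "(\<lambda>j. f j k) ` {j \<in> {0..<v}. f j k \<notin> U} \<subseteq> {0..<int v} - U" using img_sub by blast
      next
        show "{0..<int v} - U \<subseteq> (\<lambda>j. f j k) ` {j \<in> {0..<v}. f j k \<notin> U}"
        proof
          fix d assume d: "d \<in> {0..<int v} - U"
          then obtain j where "j \<in> {0..<v}" "f j k = d" using img by (metis DiffD1 imageE)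
          then show "d \<in> (\<lambda>j. f j k) ` {j \<in> {0..<v}. f j k \<notin> U}" using d by blast
        qed
      qed
      ultimately have "card {j. j < v \<and> P j k = None} = card ({0..<int v} - U)"
        by (metis card_image)
      also have "\<dots> = v - b * g" using card_Diff_subset[OF finU Usub] cardU by simp
      finally show "card {j. j < v \<and> P j k = None} = v - b * g" .
    qed
  next
    show "\<forall>s\<in>{1..b * v}. \<exists>j<v. \<exists>k<v. P j k = Some s"
    proof
      fix s assume s: "s \<in> {1..b * v}"
      define i where "i = (s - 1) div v"
      define t where "t = (s - 1) mod v"
      have st: "s = i * v + t + 1" unfolding i_def t_def using s by simp
      have tv: "t < v" unfolding t_def using assms(1) by simp
      have ib: "i < b" unfolding i_def proof -
        have "s - 1 < b * v" using s by auto
        then show "(s - 1) div v < b" by (simp add: div_less_iff_less_mult assms(1))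
      qed
      have "card (e i) = g" using cardB eD ib by blast
      then have "e i \<noteq> {}" using assms(2) by auto
      then obtain x where x: "x \<in> e i" by blast
      have x0: "0 \<le> x" "x < int v" using sub[OF eD[OF ib]] x by auto
      define h where "h = (int v + 1) div 2"
      define kk where "kk = ((int t + x) * h) mod int v"
      define jj where "jj = ((int t - x) * h) mod int v"
      have kk0: "0 \<le> kk" "kk < int v" unfolding kk_def using vi by auto
      have jj0: "0 \<le> jj" "jj < int v" unfolding jj_def using vi by auto
      define k where "k = nat kk"
      define j where "j = nat jj"
      have ik: "int k = kk" "int j = jj" unfolding k_def j_def using kk0 jj0 by auto
      have kv: "k < v" "j < v" using ik kk0 jj0 by linarith+
      have "f j k = (kk - jj) mod int v" unfolding f_def ik by simp
      also have "\<dots> = ((int t + x) * h - (int t - x) * h) mod int v"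
        unfolding kk_def jj_def by (simp add: mod_diff_eq)
      also have "\<dots> = (2 * h * x) mod int v" by (simp add: algebra_simps)
      also have "\<dots> = x mod int v" unfolding h_def using two_inv[OF oddi] by simp
      also have "\<dots> = x" using x0 by simp
      finally have fx: "f j k = x" .
      have "int ((j + k) mod v) = (jj + kk) mod int v" using ik by (simp add: zmod_int)
      also have "\<dots> = ((int t - x) * h + (int t + x) * h) mod int v"
        unfolding kk_def jj_def by (simp add: mod_add_eq)
      also have "\<dots> = (2 * h * int t) mod int v" by (simp add: algebra_simps)
      also have "\<dots> = int t mod int v" unfolding h_def using two_inv[OF oddi] by simp
      also have "\<dots> = int t" using tv by simp
      finally have jk: "(j + k) mod v = t" by simp
      have "f j k \<in> U" using fx x inU ib by blast
      then have "P j k = Some s" unfolding P_def using fx jk idx[OF ib x] st by simp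
      then show "\<exists>j<v. \<exists>k<v. P j k = Some s" using kv by blast
    qed
  next
    show "\<forall>j1<v. \<forall>k1<v. \<forall>j2<v. \<forall>k2<v. \<forall>s.
        P j1 k1 = Some s \<and> P j2 k2 = Some s \<and> (j1, k1) \<noteq> (j2, k2) \<longrightarrow>
        j1 \<noteq> j2 \<and> k1 \<noteq> k2 \<and> P j1 k2 = None \<and> P j2 k1 = None"
    proof (intro allI impI)
      fix j1 k1 j2 k2 s
      assume r: "j1 < v" "k1 < v" "j2 < v" "k2 < v"
        and H: "P j1 k1 = Some s \<and> P j2 k2 = Some s \<and> (j1, k1) \<noteq> (j2, k2)"
      have f1U: "f j1 k1 \<in> U" and s1: "s = idx (f j1 k1) * v + (j1 + k1) mod v + 1"
        using H unfolding P_def by (auto split: if_splits)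
      have f2U: "f j2 k2 \<in> U" and s2: "s = idx (f j2 k2) * v + (j2 + k2) mod v + 1"
        using H unfolding P_def by (auto split: if_splits)
      have "idx (f j1 k1) = idx (f j2 k2) \<and> (j1 + k1) mod v = (j2 + k2) mod v"
        using divmod_eq[of "(j1 + k1) mod v" v "(j2 + k2) mod v" "idx (f j1 k1)" "idx (f j2 k2)"] s1 s2 assms(1)
        by simp
      then have ieq: "idx (f j1 k1) = idx (f j2 k2)" and teq: "(j1 + k1) mod v = (j2 + k2) mod v" by auto
      have tint: "(int j1 + int k1) mod int v = (int j2 + int k2) mod int v"
        using teq by (metis of_nat_add of_nat_mod)
      have dsum: "int v dvd (int j1 + int k1) - (int j2 + int k2)" using tint by (simp add: mod_eq_dvd_iff)
      have mem: "d \<in> e (idx d)" if "d \<in> U" for d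
        using that inU idx by metis
      define i where "i = idx (f j1 k1)"
      have ib: "i < b" unfolding i_def using idxlt f1U by blast
      have x: "f j1 k1 \<in> e i" unfolding i_def using mem f1U by blast
      have y: "f j2 k2 \<in> e i" unfolding i_def ieq using mem f2U by blast
      have jne: "j1 \<noteq> j2"
      proof
        assume "j1 = j2"
        then have "int v dvd int k1 - int k2" using dsum by simp
        then have "int k1 mod int v = int k2 mod int v" by (simp add: mod_eq_dvd_iff)
        then have "k1 = k2" using r by simp
        then show False using H \<open>j1 = j2\<close> by simp
      qed
      have kne: "k1 \<noteq> k2"
      proof
        assume "k1 = k2"
        then have "int v dvd int j1 - int j2" using dsum by simp
        then have "int j1 mod int v = int j2 mod int v" by (simp add: mod_eq_dvd_iff)
        then have "j1 = j2" using r by simp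
        then show False using jne by simp
      qed
      have xy: "f j1 k1 \<noteq> f j2 k2"
      proof
        assume "f j1 k1 = f j2 k2"
        then have "int v dvd (int k1 - int j1) - (int k2 - int j2)" unfolding f_def by (simp add: mod_eq_dvd_iff)
        then have "int v dvd ((int k1 - int j1) - (int k2 - int j2)) + ((int j1 + int k1) - (int j2 + int k2))"
          using dsum by (rule dvd_add)
        then have "int v dvd 2 * int k1 - 2 * int k2" by (simp add: algebra_simps)
        then have "(2 * int k1) mod int v = (2 * int k2) mod int v" by (simp add: mod_eq_dvd_iff)
        then have "int k1 mod int v = int k2 mod int v" using cancel2[OF oddi] by blast
        then have "k1 = k2" using r by simp
        then show False using kne by simp
      qed
      have hs1: "half_sum (int v) (f j1 k1) (f j2 k2) = f j1 k2"
        and hs2: "half_sum (int v) (f j1 k1) (f j2 k2) = f j2 k1"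
        using hs_lemma[OF oddi, of "f j1 k1" "int k1" "int j1" "f j2 k2" "int k2" "int j2"] tint
        unfolding f_def by auto
      have "half_sum (int v) (f j1 k1) (f j2 k2) \<notin> U"
        unfolding U_def using nhs[OF eD[OF ib] x y xy] .
      then have "f j1 k2 \<notin> U" "f j2 k1 \<notin> U" using hs1 hs2 by auto
      then show "j1 \<noteq> j2 \<and> k1 \<noteq> k2 \<and> P j1 k2 = None \<and> P j2 k1 = None"
        using jne kne unfolding P_def by simp
    qed
  qed
  have r1: "real (v - b * g) = real v - real (b * g)" using bg by simp
  have vr: "real v > 0" using assms(1) by simp
  show ?thesis
    using bg pda vr assms(2,3) by (auto simp: r1 field_simps)
qed

end
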